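(* (a) If $\mathrm{GC}(l,0)$ is a Goldberg-Coxeter operation whose vertex $v_0$ has colour 2, then $l=3k$ for a positive integer $k$, and $\mathrm{GC}(3k,0)=\mathrm{GC}(k,k)\circ\mathrm{GC}(1,1)$. (b) For every positive integer $l$, $\mathrm{GC}(l,l)=\mathrm{GC}(l,0)\circ\mathrm{GC}(1,1)$.
   Context: Let $T_H$ be the regular hexagonal tiling of the plane and $B_{T_H}$ its barycentric subdivision (a vertex added in every face and on every edge, each face-vertex joined to the vertices and edge-vertices on its face boundary; original vertices coloured 0, edge-vertices 1, face-vertices 2; the triangles are chambers). Coordinates: $(0,0)$ is the centre of a face $f$, $(0,1)$ is a vertex of $f$ and $(1,0)$ is the vertex of $f$ preceding $(0,1)$ clockwise on its boundary; integer point $(x,y)$ is a face centre iff $x-y\equiv0\pmod3$ and a vertex otherwise. For $l\ge1$, $m\in\{0,l\}$, $\mathrm{GC}(l,m)$ is the coloured plane triangulated triangle cut out of $B_{T_H}$ with corners $v_0=(l,m)$, $v_1=(\frac{l-m}{2},\frac{l+2m}{2})$, $v_2=(0,0)$. Such an operation $O$ is applied to a map $P$ by gluing into every chamber of the barycentric subdivision $B_P$ a copy of $O$ or its mirror image (adjacent chambers receiving mirror images), identifying $v_i$ with the colour-$i$ vertex of the chamber and the boundary path between $v_i$ and $v_j$ with the chamber edge between the colour-$i$ and colour-$j$ vertices, yielding $B_{O(P)}$. The composite $O\circ O'$ is the operation $P\mapsto O(O'(P))$; as a coloured triangle it is obtained by gluing a copy of $O$ or its mirror image into every chamber of $O'$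 in the same way. Equality of operations means equality of these coloured triangles with marked corners (up to isomorphism). *)

theory Defs
  imports Complex_Main
begin

text \<open>A coloured triangle: a set of chambers (triangles, given as vertex sets),
a colouring of the vertices by 0,1,2, and the three marked corners
corner 0 = v0, corner 1 = v1, corner 2 = v2.\<close>

record 'a ctri =
  chambers :: "'a set set"
  colour   :: "'a \<Rightarrow> nat"
  corner   :: "nat \<Rightarrow> 'a"

text \<open>An operation additionally records, for each vertex p, its carrier: the set of
corner indices k such that p has positive barycentric coordinate w.r.t. corner k.
So carrier v_i = {i}, a vertex in the interior of the boundary path between v_i and v_j
has carrier {i,j}, and an inner vertex has carrier {0,1,2}.  This is what is needed to
glue copies of the operation into chambers.\<close>

record 'a oper = "'a ctri" +
  carrier :: "'a \<Rightarrow> nat set"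

definition verts :: "('a,'z) ctri_scheme \<Rightarrow> 'a set" where
  "verts T = \<Union>(chambers T)"

definition ctri_iso :: "('a,'x) ctri_scheme \<Rightarrow> ('b,'y) ctri_scheme \<Rightarrow> bool" where
  "ctri_iso A B \<longleftrightarrow> (\<exists>f. bij_betw f (verts A) (verts B)
      \<and> (\<lambda>C. f ` C) ` chambers A = chambers B
      \<and> (\<forall>x\<in>verts A. colour B (f x) = colour A x)
      \<and> (\<forall>k<3. f (corner A k) = corner B k))"

text \<open>Copy of O in chamber C of O': pairs (C,p).  Corner v_k of O is identified with the
colour-k vertex of C, the boundary path of O between v_i and v_j with the edge of C between
its colour-i and colour-j vertices.  Hence (C,p) and (C',q) are identified iff p = q and
C, C' have the same vertices of the colours in the carrier of p.\<close>

definition glue_rel :: "('p,'z) oper_scheme \<Rightarrow> ('q,'y) ctri_scheme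
     \<Rightarrow> 'q set \<times> 'p \<Rightarrow> 'q set \<times> 'p \<Rightarrow> bool" where
  "glue_rel Op Q a b \<longleftrightarrow> snd a = snd b \<and>
     {x \<in> fst a. colour Q x \<in> carrier Op (snd a)} = {x \<in> fst b. colour Q x \<in> carrier Op (snd a)}"

definition glue_cls :: "('p,'z) oper_scheme \<Rightarrow> ('q,'y) ctri_scheme
     \<Rightarrow> 'q set \<Rightarrow> 'p \<Rightarrow> ('q set \<times> 'p) set" where
  "glue_cls Op Q C p = {(C',q). C' \<in> chambers Q \<and> q \<in> verts Op \<and> glue_rel Op Q (C,p) (C',q)}"

text \<open>The composite Op \<circ> Q (the operation P \<mapsto> Op(Q(P))).  Its vertices are the classes;
the colour of a vertex is the colour in Op; the corner k is the point where the corner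
w_k of Q lies, i.e. the vertex v_c of a copy of Op in a chamber containing w_k,
with c the colour of w_k in Q.\<close>

definition gc_comp :: "('p,'z) oper_scheme \<Rightarrow> ('q,'y) ctri_scheme
     \<Rightarrow> ('q set \<times> 'p) set ctri" where
  "gc_comp Op Q =
     \<lparr> chambers = {glue_cls Op Q C ` T | C T. C \<in> chambers Q \<and> T \<in> chambers Op},
       colour = (\<lambda>x. colour Op (snd (SOME z. z \<in> x))),
       corner = (\<lambda>k. glue_cls Op Q (SOME C. C \<in> chambers Q \<and> corner Q k \<in> C)
                         (corner Op (colour Q (corner Q k)))) \<rparr>"

text \<open>Points are given in the (skew, 60 degree) coordinates of the paper as pairs of reals.  Edge vertices are midpoints
of two neighbouring hexagon vertices.\<close>

definition latt :: "real \<times> real \<Rightarrow> bool" where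
  "latt p \<longleftrightarrow> fst p \<in> \<int> \<and> snd p \<in> \<int>"

definition face_ctr :: "real \<times> real \<Rightarrow> bool" where
  "face_ctr p \<longleftrightarrow> latt p \<and> (\<exists>k::int. fst p - snd p = 3 * of_int k)"

definition hex_vert :: "real \<times> real \<Rightarrow> bool" where
  "hex_vert p \<longleftrightarrow> latt p \<and> \<not> face_ctr p"

definition nbr :: "real \<times> real \<Rightarrow> real \<times> real \<Rightarrow> bool" where
  "nbr p q \<longleftrightarrow> latt p \<and> latt q \<and>
     (fst q - fst p, snd q - snd p) \<in> {(1,0),(0,1),(-1,1),(-1,0),(0,-1),(1,-1)}"

definition midpt :: "real \<times> real \<Rightarrow> real \<times> real \<Rightarrow> real \<times> real" where
  "midpt u w = ((fst u + fst w) / 2, (snd u + snd w) / 2)"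

text \<open>Chambers of B(T_H): every lattice triangle {c,u,w} (c a face centre, uw a hexagon
edge) is split into the chambers {c,u,m} and {c,w,m}, m the midpoint of uw.\<close>
definition BH_chambers :: "(real \<times> real) set set" where
  "BH_chambers = {{c, u, midpt u w} | c u w.
      face_ctr c \<and> hex_vert u \<and> hex_vert w \<and> nbr c u \<and> nbr c w \<and> nbr u w}"

definition BH_colour :: "real \<times> real \<Rightarrow> nat" where
  "BH_colour p = (if face_ctr p then 2 else if hex_vert p then 0 else 1)"

definition comb :: "real \<Rightarrow> real \<Rightarrow> real \<Rightarrow> real \<times> real \<Rightarrow> real \<times> real \<Rightarrow> real \<times> real
                    \<Rightarrow> real \<times> real" where
  "comb \<alpha> \<beta> \<gamma> a b c = (\<alpha> * fst a + \<beta> * fst b + \<gamma> * fst c, \<alpha> * snd a + \<beta> * snd b + \<gamma> * snd c)"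

definition bary :: "real \<times> real \<Rightarrow> real \<times> real \<Rightarrow> real \<times> real \<Rightarrow> real \<times> real \<Rightarrow> real list \<Rightarrow> bool" where
  "bary a b c p cs \<longleftrightarrow> (\<exists>\<alpha> \<beta> \<gamma>. cs = [\<alpha>, \<beta>, \<gamma>] \<and> \<alpha> \<ge> 0 \<and> \<beta> \<ge> 0 \<and> \<gamma> \<ge> 0 \<and>
      \<alpha> + \<beta> + \<gamma> = 1 \<and> p = comb \<alpha> \<beta> \<gamma> a b c)"

definition in_tri :: "real \<times> real \<Rightarrow> real \<times> real \<Rightarrow> real \<times> real \<Rightarrow> real \<times> real \<Rightarrow> bool" where
  "in_tri a b c p \<longleftrightarrow> (\<exists>cs. bary a b c p cs)"

definition GC_corner :: "nat \<Rightarrow> nat \<Rightarrow> nat \<Rightarrow> real \<times> real" where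
  "GC_corner l m k =
     (if k = 0 then (real l, real m)
      else if k = 1 then ((real l - real m) / 2, (real l + 2 * real m) / 2)
      else (0, 0))"

definition GC :: "nat \<Rightarrow> nat \<Rightarrow> (real \<times> real) oper" where
  "GC l m =
     (let a = GC_corner l m 0; b = GC_corner l m 1; c = GC_corner l m 2 in
      \<lparr> chambers = {C \<in> BH_chambers. \<forall>p\<in>C. in_tri a b c p},
        colour = BH_colour,
        corner = GC_corner l m,
        carrier = (\<lambda>p. {k. k < 3 \<and> (\<exists>cs. bary a b c p cs \<and> cs ! k > 0)}) \<rparr>)"

end

theory Submission
  imports Defs
begin

lemma GC_simps:
 "chambers (GC l m) = {C \<in> BH_chambers. \<forall>p\<in>C. in_tri (GC_corner l m 0) (GC_corner l m 1) (GC_corner l m 2) p}"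
 "colour (GC l m) = BH_colour" "corner (GC l m) = GC_corner l m"
 "carrier (GC l m) = (\<lambda>p. {k. k<3 \<and> (\<exists>cs. bary (GC_corner l m 0) (GC_corner l m 1) (GC_corner l m 2) p cs \<and> cs!k > 0)})"
  by (simp_all add: GC_def Let_def)

lemma GCc: "GC_corner l m 0 = (real l, real m)"
  "GC_corner l m 1 = ((real l - real m) / 2, (real l + 2 * real m) / 2)"
  "GC_corner l m 2 = (0,0)"
  by (simp_all add: GC_corner_def)

definition tl0 :: "real \<Rightarrow> real \<times> real \<Rightarrow> bool" where
  "tl0 L p \<longleftrightarrow> snd p \<ge> 0 \<and> snd p \<le> fst p \<and> fst p + snd p \<le> L"
definition tll :: "real \<Rightarrow> real \<times> real \<Rightarrow> bool" where
  "tll L p \<longleftrightarrow> fst p \<ge> 0 \<and> fst p \<le> snd p \<and> fst p + 2 * snd p \<le> 3 * L"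

lemma bary_l0:
  assumes L: "L > 0"
  shows "bary (L,0) (L/2,L/2) (0,0) p cs \<longleftrightarrow> tl0 L p \<and>
     cs = [(fst p - snd p)/L, 2*snd p/L, 1 - (fst p + snd p)/L]"
proof
  assume "bary (L,0) (L/2,L/2) (0,0) p cs"
  then obtain a b c where h: "cs = [a,b,c]" "a\<ge>0" "b\<ge>0" "c\<ge>0" "a+b+c=1"
    "p = comb a b c (L,0) (L/2,L/2) (0,0)" unfolding bary_def by blast
  have p: "fst p = a*L + b*L/2" "snd p = b*L/2" using h(6) by (auto simp: comb_def)
  have c: "c = 1-a-b" using h(5) by simp
  have hb: "b = 2*snd p/L" using L p(2) by (simp add: field_simps)
  have ha: "a = (fst p - snd p)/L" using L p by (simp add: field_simps)
  have s: "fst p + snd p = (a+b)*L" using p by (simp add: algebra_simps)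
  have hc: "c = 1 - (fst p + snd p)/L" unfolding s using L c by simp
  have m: "a*L \<ge> 0" "b*L \<ge> 0" "c*L \<ge> 0" using h L by simp_all
  have ab: "a + b = 1 - c" using h(5) by simp
  have t3: "fst p + snd p = L - c * L" unfolding s ab by (simp add: algebra_simps)
  have "snd p \<ge> 0" using p(2) m(2) by simp
  moreover have "snd p \<le> fst p" using p m(1) by simp
  moreover have "fst p + snd p \<le> L" using t3 m(3) by simp
  ultimately have "tl0 L p" unfolding tl0_def by simp
  then show "tl0 L p \<and> cs = [(fst p - snd p)/L, 2*snd p/L, 1 - (fst p + snd p)/L]"
    using h(1) ha hb hc by simp
next
  assume h: "tl0 L p \<and> cs = [(fst p - snd p)/L, 2*snd p/L, 1 - (fst p + snd p)/L]"
  have e: "p = comb ((fst p - snd p)/L) (2*snd p/L) (1 - (fst p + snd p)/L) (L,0) (L/2,L/2) (0,0)"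
    using L by (simp add: comb_def prod_eq_iff field_simps)
  have n: "(fst p - snd p)/L \<ge> 0" "2*snd p/L \<ge> 0" "1 - (fst p + snd p)/L \<ge> 0"
    using h L by (auto simp: tl0_def field_simps)
  have sm: "(fst p - snd p)/L + 2*snd p/L + (1 - (fst p + snd p)/L) = 1"
    using L by (simp add: field_simps)
  show "bary (L,0) (L/2,L/2) (0,0) p cs" unfolding bary_def
    apply (rule exI[of _ "(fst p - snd p)/L"], rule exI[of _ "2*snd p/L"], rule exI[of _ "1 - (fst p + snd p)/L"])
    apply (intro conjI)
    apply (rule h[THEN conjunct2])
    apply (rule n(1))
    apply (rule n(2))
    apply (rule n(3))
    apply (rule sm)
    apply (rule e)
    done
qed

lemma bary_ll:
  assumes L: "L > 0"
  shows "bary (L,L) (0,3*L/2) (0,0) p cs \<longleftrightarrow> tll L p \<and>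
     cs = [fst p/L, 2*(snd p - fst p)/(3*L), 1 - (fst p + 2*snd p)/(3*L)]"
proof
  assume "bary (L,L) (0,3*L/2) (0,0) p cs"
  then obtain a b c where h: "cs = [a,b,c]" "a\<ge>0" "b\<ge>0" "c\<ge>0" "a+b+c=1"
    "p = comb a b c (L,L) (0,3*L/2) (0,0)" unfolding bary_def by blast
  have p: "fst p = a*L" "snd p = a*L + b*(3*L/2)" using h(6) by (auto simp: comb_def)
  have c: "c = 1-a-b" using h(5) by simp
  have ha: "a = fst p/L" using L p(1) by (simp add: field_simps)
  have d: "snd p - fst p = b*(3*L/2)" using p by simp
  have hb: "b = 2*(snd p - fst p)/(3*L)" unfolding d using L by (simp add: field_simps)
  have s: "fst p + 2*snd p = (a+b)*(3*L)" using p by (simp add: algebra_simps)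
  have hc: "c = 1 - (fst p + 2*snd p)/(3*L)" unfolding s using L c by simp
  have m: "a*L \<ge> 0" "b*(3*L/2) \<ge> 0" "c*(3*L) \<ge> 0" using h L by simp_all
  have ab: "a + b = 1 - c" using h(5) by simp
  have t3: "fst p + 2*snd p = 3*L - c * (3*L)" unfolding s ab by (simp add: algebra_simps)
  have "fst p \<ge> 0" using p(1) m(1) by simp
  moreover have "fst p \<le> snd p" using d m(2) by linarith
  moreover have "fst p + 2*snd p \<le> 3*L" using t3 m(3) by simp
  ultimately have "tll L p" unfolding tll_def by simp
  then show "tll L p \<and> cs = [fst p/L, 2*(snd p - fst p)/(3*L), 1 - (fst p + 2*snd p)/(3*L)]"
    using h(1) ha hb hc by simp
next
  assume h: "tll L p \<and> cs = [fst p/L, 2*(snd p - fst p)/(3*L), 1 - (fst p + 2*snd p)/(3*L)]"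
  have e: "p = comb (fst p/L) (2*(snd p - fst p)/(3*L)) (1 - (fst p + 2*snd p)/(3*L)) (L,L) (0,3*L/2) (0,0)"
    using L by (simp add: comb_def prod_eq_iff field_simps)
  have n: "fst p/L \<ge> 0" "2*(snd p - fst p)/(3*L) \<ge> 0" "1 - (fst p + 2*snd p)/(3*L) \<ge> 0"
    using h L by (auto simp: tll_def field_simps)
  have sm: "fst p/L + 2*(snd p - fst p)/(3*L) + (1 - (fst p + 2*snd p)/(3*L)) = 1"
    using L by (simp add: field_simps)
  show "bary (L,L) (0,3*L/2) (0,0) p cs" unfolding bary_def
    apply (rule exI[of _ "fst p/L"], rule exI[of _ "2*(snd p - fst p)/(3*L)"], rule exI[of _ "1 - (fst p + 2*snd p)/(3*L)"])
    apply (intro conjI)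
    apply (rule h[THEN conjunct2])
    apply (rule n(1))
    apply (rule n(2))
    apply (rule n(3))
    apply (rule sm)
    apply (rule e)
    done
qed



definition U :: "(real \<times> real) set" where
  "U = {(1,0),(0,1),(-1,1),(-1,0),(0,-1),(1,-1)}"

lemma nbr_U: "nbr p q \<longleftrightarrow> latt p \<and> latt q \<and> (fst q - fst p, snd q - snd p) \<in> U"
  unfolding nbr_def U_def by simp

lemma latt_iff: "latt p \<longleftrightarrow> (\<exists>i j. p = (of_int i, of_int j))"
  unfolding latt_def by (cases p) (auto elim!: Ints_cases)

lemma face_iff: "face_ctr p \<longleftrightarrow> (\<exists>i j. p = (of_int i, of_int j) \<and> (3::int) dvd (i - j))"
proof
  assume "face_ctr p"
  then obtain i j k where p: "p = (of_int i, of_int j)" and k: "fst p - snd p = 3 * of_int k"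
    unfolding face_ctr_def latt_iff by blast
  then have "of_int (i - j) = (of_int (3*k) :: real)" by simp
  then have "i - j = 3 * k" by (simp only: of_int_eq_iff)
  then show "\<exists>i j. p = (of_int i, of_int j) \<and> (3::int) dvd (i - j)" using p by auto
next
  assume "\<exists>i j. p = (of_int i, of_int j) \<and> (3::int) dvd (i - j)"
  then obtain i j k where p: "p = (of_int i, of_int j)" and k: "i - j = 3 * k" by (auto elim!: dvdE)
  then have "fst p - snd p = 3 * of_int k" by (simp flip: of_int_diff)
  then show "face_ctr p" unfolding face_ctr_def latt_iff using p by blast
qed

definition pres :: "(real \<times> real \<Rightarrow> real \<times> real) \<Rightarrow> bool" where
  "pres f \<longleftrightarrow> (\<forall>p. latt p \<longrightarrow> latt (f p)) \<and> (\<forall>p. face_ctr p \<longrightarrow> face_ctr (f p))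
     \<and> (\<forall>p q. nbr p q \<longrightarrow> nbr (f p) (f q)) \<and> (\<forall>u w. f (midpt u w) = midpt (f u) (f w))"

definition aut :: "(real \<times> real \<Rightarrow> real \<times> real) \<Rightarrow> (real \<times> real \<Rightarrow> real \<times> real) \<Rightarrow> bool" where
  "aut f g \<longleftrightarrow> pres f \<and> pres g \<and> (\<forall>p. g (f p) = p) \<and> (\<forall>p. f (g p) = p)"

lemma aut_sym: "aut f g \<Longrightarrow> aut g f"
  unfolding aut_def by blast

lemma aut_face: "aut f g \<Longrightarrow> face_ctr (f p) \<longleftrightarrow> face_ctr p"
  unfolding aut_def pres_def by metis

lemma aut_latt: "aut f g \<Longrightarrow> latt (f p) \<longleftrightarrow> latt p"
  unfolding aut_def pres_def by metis

lemma aut_hex: "aut f g \<Longrightarrow> hex_vert (f p) \<longleftrightarrow> hex_vert p"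
  unfolding hex_vert_def using aut_face aut_latt by blast

lemma aut_colour: "aut f g \<Longrightarrow> BH_colour (f p) = BH_colour p"
  unfolding BH_colour_def using aut_face aut_hex by simp

lemma aut_BH: assumes "aut f g" "D \<in> BH_chambers" shows "f ` D \<in> BH_chambers"
proof -
  obtain c u w where D: "D = {c, u, midpt u w}" and h: "face_ctr c" "hex_vert u" "hex_vert w"
    "nbr c u" "nbr c w" "nbr u w" using assms(2) unfolding BH_chambers_def by blast
  have P: "pres f" using assms(1) unfolding aut_def by blast
  have m: "f (midpt u w) = midpt (f u) (f w)" using P unfolding pres_def by blast
  have "f ` D = {f c, f u, midpt (f u) (f w)}" unfolding D m[symmetric] by simp
  moreover have "face_ctr (f c)" "hex_vert (f u)" "hex_vert (f w)"
    "nbr (f c) (f u)" "nbr (f c) (f w)" "nbr (f u) (f w)"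
    using h aut_face[OF assms(1)] aut_hex[OF assms(1)] P unfolding pres_def by blast+
  ultimately show ?thesis unfolding BH_chambers_def by blast
qed

definition sw :: "real \<times> real \<Rightarrow> real \<times> real" where "sw p = (snd p, fst p)"
definition rB2 :: "real \<Rightarrow> real \<times> real \<Rightarrow> real \<times> real" where "rB2 L p = (L - fst p, L - snd p)"
definition rB3 :: "real \<Rightarrow> real \<times> real \<Rightarrow> real \<times> real" where "rB3 L p = (L - fst p - snd p, L + snd p)"
definition rB3i :: "real \<Rightarrow> real \<times> real \<Rightarrow> real \<times> real" where "rB3i L p = (2*L - fst p - snd p, snd p - L)"
definition rA2 :: "real \<Rightarrow> real \<times> real \<Rightarrow> real \<times> real" where "rA2 T p = (T - fst p - snd p, fst p)"
definition rA2i :: "real \<Rightarrow> real \<times> real \<Rightarrow> real \<times> real" where "rA2i T p = (snd p, T - fst p - snd p)"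
definition rA3 :: "real \<Rightarrow> real \<times> real \<Rightarrow> real \<times> real" where "rA3 T p = (T - fst p - snd p, snd p)"

lemma pres_sw: "pres sw"
  unfolding pres_def
proof (intro conjI allI impI)
  fix p assume "latt p" then show "latt (sw p)" by (auto simp: latt_def sw_def)
next
  fix p assume "face_ctr p"
  then obtain i j where "p = (of_int i, of_int j)" "(3::int) dvd (i - j)" unfolding face_iff by blast
  then show "face_ctr (sw p)" unfolding face_iff sw_def
    by (intro exI[of _ j] exI[of _ i]) (simp, presburger)
next
  fix p q assume "nbr p q" then show "nbr (sw p) (sw q)"
    unfolding nbr_U by (auto simp: latt_def sw_def U_def)
next
  fix u w show "sw (midpt u w) = midpt (sw u) (sw w)" by (simp add: sw_def midpt_def)
qed

lemma pres_rB2: assumes "L \<in> \<int>" shows "pres (rB2 L)"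
  unfolding pres_def
proof (intro conjI allI impI)
  fix p assume "latt p" then show "latt (rB2 L p)" using assms by (auto simp: latt_def rB2_def)
next
  fix p assume "face_ctr p"
  then obtain i j where "p = (of_int i, of_int j)" "(3::int) dvd (i - j)" unfolding face_iff by blast
  moreover obtain N where "L = of_int N" using assms by (auto elim!: Ints_cases)
  ultimately show "face_ctr (rB2 L p)" unfolding face_iff rB2_def
    by (intro exI[of _ "N - i"] exI[of _ "N - j"]) (simp, presburger)
next
  fix p q assume "nbr p q" then show "nbr (rB2 L p) (rB2 L q)"
    using assms unfolding nbr_U by (auto simp: latt_def rB2_def U_def)
next
  fix u w show "rB2 L (midpt u w) = midpt (rB2 L u) (rB2 L w)" by (simp add: rB2_def midpt_def field_simps)
qed

lemma pres_rB3: assumes "L \<in> \<int>" shows "pres (rB3 L)"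
  unfolding pres_def
proof (intro conjI allI impI)
  fix p assume "latt p" then show "latt (rB3 L p)" using assms by (auto simp: latt_def rB3_def)
next
  fix p assume "face_ctr p"
  then obtain i j where "p = (of_int i, of_int j)" "(3::int) dvd (i - j)" unfolding face_iff by blast
  moreover obtain N where "L = of_int N" using assms by (auto elim!: Ints_cases)
  ultimately show "face_ctr (rB3 L p)" unfolding face_iff rB3_def
    by (intro exI[of _ "N - i - j"] exI[of _ "N + j"]) (simp, presburger)
next
  fix p q assume "nbr p q" then show "nbr (rB3 L p) (rB3 L q)"
    using assms unfolding nbr_U by (auto simp: latt_def rB3_def U_def)
next
  fix u w show "rB3 L (midpt u w) = midpt (rB3 L u) (rB3 L w)" by (simp add: rB3_def midpt_def field_simps)
qed

lemma pres_rB3i: assumes "L \<in> \<int>" shows "pres (rB3i L)"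
  unfolding pres_def
proof (intro conjI allI impI)
  fix p assume "latt p" then show "latt (rB3i L p)" using assms by (auto simp: latt_def rB3i_def)
next
  fix p assume "face_ctr p"
  then obtain i j where "p = (of_int i, of_int j)" "(3::int) dvd (i - j)" unfolding face_iff by blast
  moreover obtain N where "L = of_int N" using assms by (auto elim!: Ints_cases)
  ultimately show "face_ctr (rB3i L p)" unfolding face_iff rB3i_def
    by (intro exI[of _ "2*N - i - j"] exI[of _ "j - N"]) (simp, presburger)
next
  fix p q assume "nbr p q" then show "nbr (rB3i L p) (rB3i L q)"
    using assms unfolding nbr_U by (auto simp: latt_def rB3i_def U_def)
next
  fix u w show "rB3i L (midpt u w) = midpt (rB3i L u) (rB3i L w)" by (simp add: rB3i_def midpt_def field_simps)
qed

lemma pres_rA2: assumes "T = 3 * of_int K" shows "pres (rA2 T)"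
  unfolding pres_def
proof (intro conjI allI impI)
  fix p assume "latt p" then show "latt (rA2 T p)" using assms by (auto simp: latt_def rA2_def)
next
  fix p assume "face_ctr p"
  then obtain i j where "p = (of_int i, of_int j)" "(3::int) dvd (i - j)" unfolding face_iff by blast
  then show "face_ctr (rA2 T p)" unfolding face_iff rA2_def assms
    by (intro exI[of _ "3*K - i - j"] exI[of _ "i"]) (simp, presburger)
next
  fix p q assume "nbr p q" then show "nbr (rA2 T p) (rA2 T q)"
    using assms unfolding nbr_U by (auto simp: latt_def rA2_def U_def)
next
  fix u w show "rA2 T (midpt u w) = midpt (rA2 T u) (rA2 T w)" by (simp add: rA2_def midpt_def field_simps)
qed

lemma pres_rA2i: assumes "T = 3 * of_int K" shows "pres (rA2i T)"
  unfolding pres_def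
proof (intro conjI allI impI)
  fix p assume "latt p" then show "latt (rA2i T p)" using assms by (auto simp: latt_def rA2i_def)
next
  fix p assume "face_ctr p"
  then obtain i j where "p = (of_int i, of_int j)" "(3::int) dvd (i - j)" unfolding face_iff by blast
  then show "face_ctr (rA2i T p)" unfolding face_iff rA2i_def assms
    by (intro exI[of _ "j"] exI[of _ "3*K - i - j"]) (simp, presburger)
next
  fix p q assume "nbr p q" then show "nbr (rA2i T p) (rA2i T q)"
    using assms unfolding nbr_U by (auto simp: latt_def rA2i_def U_def)
next
  fix u w show "rA2i T (midpt u w) = midpt (rA2i T u) (rA2i T w)" by (simp add: rA2i_def midpt_def field_simps)
qed

lemma pres_rA3: assumes "T = 3 * of_int K" shows "pres (rA3 T)"
  unfolding pres_def
proof (intro conjI allI impI)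
  fix p assume "latt p" then show "latt (rA3 T p)" using assms by (auto simp: latt_def rA3_def)
next
  fix p assume "face_ctr p"
  then obtain i j where "p = (of_int i, of_int j)" "(3::int) dvd (i - j)" unfolding face_iff by blast
  then show "face_ctr (rA3 T p)" unfolding face_iff rA3_def assms
    by (intro exI[of _ "3*K - i - j"] exI[of _ "j"]) (simp, presburger)
next
  fix p q assume "nbr p q" then show "nbr (rA3 T p) (rA3 T q)"
    using assms unfolding nbr_U by (auto simp: latt_def rA3_def U_def)
next
  fix u w show "rA3 T (midpt u w) = midpt (rA3 T u) (rA3 T w)" by (simp add: rA3_def midpt_def field_simps)
qed

lemma aut_sw: "aut sw sw"
  using pres_sw unfolding aut_def sw_def by simp
lemma aut_rB2: "L \<in> \<int> \<Longrightarrow> aut (rB2 L) (rB2 L)"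
  using pres_rB2 unfolding aut_def rB2_def by simp
lemma aut_rB3: "L \<in> \<int> \<Longrightarrow> aut (rB3 L) (rB3i L)"
  using pres_rB3 pres_rB3i unfolding aut_def rB3_def rB3i_def by simp
lemma aut_rA2: "T = 3 * of_int K \<Longrightarrow> aut (rA2 T) (rA2i T)"
  using pres_rA2 pres_rA2i unfolding aut_def rA2_def rA2i_def by simp
lemma aut_rA3: "T = 3 * of_int K \<Longrightarrow> aut (rA3 T) (rA3 T)"
  using pres_rA3 unfolding aut_def rA3_def by simp



definition ADJ :: "(real \<times> real \<times> real \<times> real) set" where
  "ADJ = {(1,0,0,1),(0,1,1,0),(0,1,-1,1),(-1,1,0,1),(-1,1,-1,0),(-1,0,-1,1),
          (-1,0,0,-1),(0,-1,-1,0),(0,-1,1,-1),(1,-1,0,-1),(1,-1,1,0),(1,0,1,-1)}"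

lemma adjU: assumes "(a1,b1) \<in> U" "(a2,b2) \<in> U" "(a2-a1,b2-b1) \<in> U"
  shows "(a1,b1,a2,b2) \<in> ADJ"
  using assms(1,2) apply (simp only: U_def insert_iff empty_iff prod.inject)
  apply (elim disjE conjE; simp)
  using assms(3) by (simp_all add: U_def ADJ_def)

lemma BH_param:
  assumes "D \<in> BH_chambers"
  shows "\<exists>i j a1 b1 a2 b2. (3::int) dvd (i - j) \<and> (a1,b1,a2,b2) \<in> ADJ \<and>
     D = {(of_int i, of_int j), (of_int i + a1, of_int j + b1),
          (of_int i + (a1+a2)/2, of_int j + (b1+b2)/2)}"
proof -
  obtain c u w where D: "D = {c, u, midpt u w}" and h: "face_ctr c" "hex_vert u" "hex_vert w"
    "nbr c u" "nbr c w" "nbr u w" using assms unfolding BH_chambers_def by blast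
  obtain i j where c: "c = (of_int i, of_int j)" "(3::int) dvd (i - j)" using h(1) unfolding face_iff by blast
  define a1 where "a1 = fst u - fst c"
  define b1 where "b1 = snd u - snd c"
  define a2 where "a2 = fst w - fst c"
  define b2 where "b2 = snd w - snd c"
  have "(a1,b1) \<in> U" "(a2,b2) \<in> U" "(a2-a1,b2-b1) \<in> U"
    using h unfolding nbr_U a1_def b1_def a2_def b2_def by auto
  then have A: "(a1,b1,a2,b2) \<in> ADJ" by (rule adjU)
  have u: "u = (of_int i + a1, of_int j + b1)" unfolding a1_def b1_def c by simp
  have w: "w = (of_int i + a2, of_int j + b2)" unfolding a2_def b2_def c by simp
  have m: "midpt u w = (of_int i + (a1+a2)/2, of_int j + (b1+b2)/2)"
    unfolding u w midpt_def by (simp add: field_simps)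
  show ?thesis unfolding D m unfolding u c(1) using c(2) A by blast
qed

definition Q0 :: "(real \<times> real) set" where "Q0 = {(0,0),(0,1),(1/2,1/2)}"
definition Q1 :: "(real \<times> real) set" where "Q1 = {(1,1),(0,1),(1/2,1/2)}"
definition Q2 :: "(real \<times> real) set" where "Q2 = {(1,1),(0,1),(0,3/2)}"

lemma in_tri_kk: assumes "k \<ge> 1"
  shows "in_tri (GC_corner k k 0) (GC_corner k k 1) (GC_corner k k 2) p \<longleftrightarrow> tll (real k) p"
proof -
  have e: "GC_corner k k 1 = (0, 3 * real k / 2)" by (simp add: GC_corner_def)
  have L: "real k > 0" using assms by simp
  have c02: "GC_corner k k 0 = (real k, real k)" "GC_corner k k 2 = (0,0)" by (simp_all add: GC_corner_def)
  show ?thesis unfolding in_tri_def e c02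
  proof
    assume "\<exists>cs. bary (real k, real k) (0, 3 * real k / 2) (0, 0) p cs"
    then show "tll (real k) p" using bary_ll[OF L, of p] by blast
  next
    assume "tll (real k) p"
    then show "\<exists>cs. bary (real k, real k) (0, 3 * real k / 2) (0, 0) p cs" using bary_ll[OF L, of p] by blast
  qed
qed

lemma in_tri_l0: assumes "l \<ge> 1"
  shows "in_tri (GC_corner l 0 0) (GC_corner l 0 1) (GC_corner l 0 2) p \<longleftrightarrow> tl0 (real l) p"
proof -
  have e: "GC_corner l 0 1 = (real l / 2, real l / 2)" by (simp add: GC_corner_def)
  have L: "real l > 0" using assms by simp
  have c02: "GC_corner l 0 0 = (real l, 0)" "GC_corner l 0 2 = (0,0)" by (simp_all add: GC_corner_def)
  show ?thesis unfolding in_tri_def e c02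
  proof
    assume "\<exists>cs. bary (real l, 0) (real l / 2, real l / 2) (0, 0) p cs"
    then show "tl0 (real l) p" using bary_l0[OF L, of p] by blast
  next
    assume "tl0 (real l) p"
    then show "\<exists>cs. bary (real l, 0) (real l / 2, real l / 2) (0, 0) p cs" using bary_l0[OF L, of p] by blast
  qed
qed

lemma chambers_kk: "k \<ge> 1 \<Longrightarrow> chambers (GC k k) = {C \<in> BH_chambers. \<forall>p\<in>C. tll (real k) p}"
  unfolding GC_simps using in_tri_kk by presburger

lemma chambers_l0: "l \<ge> 1 \<Longrightarrow> chambers (GC l 0) = {C \<in> BH_chambers. \<forall>p\<in>C. tl0 (real l) p}"
  unfolding GC_simps using in_tri_l0 by presburger

lemma chQ_sub: assumes "D \<in> BH_chambers" "\<forall>p\<in>D. tll 1 p" shows "D \<in> {Q0,Q1,Q2}"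
proof -
  obtain i j a1 b1 a2 b2 where h: "(3::int) dvd (i - j)" "(a1,b1,a2,b2) \<in> ADJ" and
    D: "D = {(of_int i, of_int j), (of_int i + a1, of_int j + b1),
          (of_int i + (a1+a2)/2, of_int j + (b1+b2)/2)}" using BH_param[OF assms(1)] by blast
  have t: "tll 1 (of_int i, of_int j)" "tll 1 (of_int i + a1, of_int j + b1)"
     "tll 1 (of_int i + (a1+a2)/2, of_int j + (b1+b2)/2)" using assms(2) D by auto
  have "0 \<le> i" "i \<le> j" using t(1) unfolding tll_def by simp_all
  moreover have "of_int (i + 2*j) \<le> (of_int 3::real)" using t(1) unfolding tll_def by simp
  then have "i + 2*j \<le> 3" by (simp only: of_int_le_iff)
  ultimately have ij: "(i = 0 \<and> j = 0) \<or> (i = 1 \<and> j = 1)" using h(1) by presburger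
  show ?thesis using ij h(2) t D
    apply (simp only: ADJ_def insert_iff empty_iff prod.inject)
    apply (elim disjE conjE)
    apply (simp_all add: tll_def Q0_def Q1_def Q2_def)
    done
qed



lemma grel_refl: "glue_rel Op Q a a" unfolding glue_rel_def by simp
lemma grel_sym: "glue_rel Op Q a b \<Longrightarrow> glue_rel Op Q b a" unfolding glue_rel_def by metis
lemma grel_trans: "glue_rel Op Q a b \<Longrightarrow> glue_rel Op Q b c \<Longrightarrow> glue_rel Op Q a c"
  unfolding glue_rel_def by metis

lemma cls_eq: assumes "glue_rel Op Q (C,p) (C',q)"
  shows "glue_cls Op Q C p = glue_cls Op Q C' q"
proof -
  have "glue_rel Op Q (C,p) z \<longleftrightarrow> glue_rel Op Q (C',q) z" for z
    using assms grel_sym grel_trans by metis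
  then show ?thesis unfolding glue_cls_def by auto
qed

lemma mem_cls: "C \<in> chambers Q \<Longrightarrow> p \<in> verts Op \<Longrightarrow> (C,p) \<in> glue_cls Op Q C p"
  unfolding glue_cls_def using grel_refl by blast

lemma cls_snd: "z \<in> glue_cls Op Q C p \<Longrightarrow> snd z = p"
  unfolding glue_cls_def glue_rel_def by auto

lemma cls_rel: "(C',q) \<in> glue_cls Op Q C p \<Longrightarrow> glue_rel Op Q (C,p) (C',q)"
  unfolding glue_cls_def by auto

lemma iso_glue:
  fixes A :: "('a,'x) ctri_scheme" and Op :: "('p,'z) oper_scheme" and Q :: "('q,'y) ctri_scheme"
    and \<psi> :: "'q set \<Rightarrow> 'p \<Rightarrow> 'a" and R :: "'p \<Rightarrow> bool"
  assumes R: "\<And>T p. T \<in> chambers Op \<Longrightarrow> p \<in> T \<Longrightarrow> R p"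
  and H1: "\<And>C C' p q. C \<in> chambers Q \<Longrightarrow> C' \<in> chambers Q \<Longrightarrow> R p \<Longrightarrow> R q \<Longrightarrow>
              \<psi> C p = \<psi> C' q \<longleftrightarrow> glue_rel Op Q (C,p) (C',q)"
  and H2: "chambers A = {\<psi> C ` T | C T. C \<in> chambers Q \<and> T \<in> chambers Op}"
  and H3: "\<And>C p. C \<in> chambers Q \<Longrightarrow> p \<in> verts Op \<Longrightarrow> colour A (\<psi> C p) = colour Op p"
  and H4: "\<And>k. k < 3 \<Longrightarrow> \<exists>C\<in>chambers Q. corner Q k \<in> C"
  and H5: "\<And>k C. k < 3 \<Longrightarrow> C \<in> chambers Q \<Longrightarrow> corner Q k \<in> C \<Longrightarrow>
     \<psi> C (corner Op (colour Q (corner Q k))) = corner A k \<and> R (corner Op (colour Q (corner Q k)))"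
  shows "ctri_iso A (gc_comp Op Q)"
proof -
  define f where "f P = (let z = (SOME z. fst z \<in> chambers Q \<and> R (snd z) \<and> \<psi> (fst z) (snd z) = P)
     in glue_cls Op Q (fst z) (snd z))" for P
  have key: "f (\<psi> C p) = glue_cls Op Q C p" if C: "C \<in> chambers Q" and p: "R p" for C p
  proof -
    define z where "z = (SOME z. fst z \<in> chambers Q \<and> R (snd z) \<and> \<psi> (fst z) (snd z) = \<psi> C p)"
    have "\<exists>z. fst z \<in> chambers Q \<and> R (snd z) \<and> \<psi> (fst z) (snd z) = \<psi> C p"
      using C p by (intro exI[of _ "(C,p)"]) simp
    then have z: "fst z \<in> chambers Q \<and> R (snd z) \<and> \<psi> (fst z) (snd z) = \<psi> C p"
      unfolding z_def by (rule someI_ex)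
    then have "glue_rel Op Q (fst z, snd z) (C, p)" using H1 C p by blast
    then have "glue_cls Op Q (fst z) (snd z) = glue_cls Op Q C p" by (rule cls_eq)
    then show ?thesis unfolding f_def z_def[symmetric] Let_def .
  qed
  have Rv: "R p" if "p \<in> verts Op" for p using that R unfolding verts_def by blast
  have VA: "verts A = {\<psi> C p | C p. C \<in> chambers Q \<and> p \<in> verts Op}"
    unfolding verts_def H2 by blast
  have chB: "chambers (gc_comp Op Q) = {glue_cls Op Q C ` T | C T. C \<in> chambers Q \<and> T \<in> chambers Op}"
    unfolding gc_comp_def by simp
  have VB: "verts (gc_comp Op Q) = {glue_cls Op Q C p | C p. C \<in> chambers Q \<and> p \<in> verts Op}"
    unfolding verts_def chB by blast
  have inj: "inj_on f (verts A)"
  proof (rule inj_onI)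
    fix x y assume x: "x \<in> verts A" and y: "y \<in> verts A" and e: "f x = f y"
    obtain C p where xC: "x = \<psi> C p" "C \<in> chambers Q" "p \<in> verts Op" using x VA by blast
    obtain C' q where yC: "y = \<psi> C' q" "C' \<in> chambers Q" "q \<in> verts Op" using y VA by blast
    have "glue_cls Op Q C p = glue_cls Op Q C' q" using e key xC yC Rv by metis
    then have "(C,p) \<in> glue_cls Op Q C' q" using mem_cls xC by metis
    then have "glue_rel Op Q (C',q) (C,p)" by (rule cls_rel)
    then show "x = y" using H1 xC yC Rv by metis
  qed
  have img: "f ` verts A = verts (gc_comp Op Q)"
  proof
    show "f ` verts A \<subseteq> verts (gc_comp Op Q)"
    proof
      fix y assume "y \<in> f ` verts A"
      then obtain C p where "y = f (\<psi> C p)" "C \<in> chambers Q" "p \<in> verts Op" unfolding VA by blast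
      then show "y \<in> verts (gc_comp Op Q)" unfolding VB using key Rv by blast
    qed
    show "verts (gc_comp Op Q) \<subseteq> f ` verts A"
    proof
      fix y assume "y \<in> verts (gc_comp Op Q)"
      then obtain C p where "y = glue_cls Op Q C p" "C \<in> chambers Q" "p \<in> verts Op" unfolding VB by blast
      then show "y \<in> f ` verts A" unfolding VA using key Rv by (intro image_eqI[of _ _ "\<psi> C p"]) auto
    qed
  qed
  have imT: "f ` (\<psi> C ` T) = glue_cls Op Q C ` T" if "C \<in> chambers Q" "T \<in> chambers Op" for C T
  proof -
    have "f ` (\<psi> C ` T) = (\<lambda>p. f (\<psi> C p)) ` T" by (simp add: image_image)
    also have "\<dots> = glue_cls Op Q C ` T" using key that R by (intro image_cong) auto
    finally show ?thesis .
  qed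
  have ch: "(\<lambda>X. f ` X) ` chambers A = chambers (gc_comp Op Q)"
  proof
    show "(\<lambda>X. f ` X) ` chambers A \<subseteq> chambers (gc_comp Op Q)"
      unfolding H2 chB using imT by fastforce
    show "chambers (gc_comp Op Q) \<subseteq> (\<lambda>X. f ` X) ` chambers A"
    proof
      fix Y assume "Y \<in> chambers (gc_comp Op Q)"
      then obtain C T where "Y = glue_cls Op Q C ` T" "C \<in> chambers Q" "T \<in> chambers Op" unfolding chB by blast
      then show "Y \<in> (\<lambda>X. f ` X) ` chambers A" unfolding H2 using imT
        by (intro image_eqI[of _ _ "\<psi> C ` T"]) auto
    qed
  qed
  have col: "colour (gc_comp Op Q) (f x) = colour A x" if xv: "x \<in> verts A" for x
  proof -
    obtain C p where xC: "x = \<psi> C p" "C \<in> chambers Q" "p \<in> verts Op" using xv VA by blast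
    have fx: "f x = glue_cls Op Q C p" using key xC Rv by blast
    have "\<exists>z. z \<in> glue_cls Op Q C p" using mem_cls[OF xC(2) xC(3)] by blast
    then have "(SOME z. z \<in> glue_cls Op Q C p) \<in> glue_cls Op Q C p" by (rule someI_ex)
    then have "snd (SOME z. z \<in> glue_cls Op Q C p) = p" by (rule cls_snd)
    then show ?thesis unfolding fx using H3 xC by (simp add: gc_comp_def)
  qed
  have cor: "f (corner A k) = corner (gc_comp Op Q) k" if k3: "k < 3" for k
  proof -
    define C0 where "C0 = (SOME C. C \<in> chambers Q \<and> corner Q k \<in> C)"
    have "\<exists>C. C \<in> chambers Q \<and> corner Q k \<in> C" using H4 k3 by blast
    then have C0: "C0 \<in> chambers Q \<and> corner Q k \<in> C0" unfolding C0_def by (rule someI_ex)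
    have "corner A k = \<psi> C0 (corner Op (colour Q (corner Q k)))"
      and r: "R (corner Op (colour Q (corner Q k)))" using H5 k3 C0 by metis+
    then have "f (corner A k) = glue_cls Op Q C0 (corner Op (colour Q (corner Q k)))"
      using key C0 by metis
    then show ?thesis unfolding gc_comp_def C0_def by simp
  qed
  show ?thesis unfolding ctri_iso_def
    using inj img ch col cor unfolding bij_betw_def by blast
qed



lemma side_b1:
  assumes "D \<in> BH_chambers" "L = of_int N"
  shows "(\<forall>p\<in>D. fst p + snd p \<le> L) \<or> (\<forall>p\<in>D. fst p + snd p \<ge> L)"
proof -
  obtain i j a1 b1 a2 b2 where h: "(3::int) dvd (i - j)" "(a1,b1,a2,b2) \<in> ADJ" and
    D: "D = {(of_int i, of_int j), (of_int i + a1, of_int j + b1),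
          (of_int i + (a1+a2)/2, of_int j + (b1+b2)/2)}" using BH_param[OF assms(1)] by blast
  have "i + j = N \<or> i + j \<ge> N + 1 \<or> i + j \<le> N - 1" by linarith
  then have n: "of_int i + of_int j = L \<or> of_int i + of_int j \<ge> L + 1 \<or> of_int i + of_int j \<le> L - 1"
    unfolding assms(2) by (metis of_int_add of_int_le_iff of_int_diff of_int_1)
  show ?thesis using h(2) n unfolding D
    apply (simp only: ADJ_def insert_iff empty_iff prod.inject)
    apply (elim disjE conjE)
    apply (simp_all)
    done
qed

lemma side_b2:
  assumes "D \<in> BH_chambers" "L = of_int N"
  shows "(\<forall>p\<in>D. snd p \<le> L) \<or> (\<forall>p\<in>D. snd p \<ge> L)"
proof -
  obtain i j a1 b1 a2 b2 where h: "(3::int) dvd (i - j)" "(a1,b1,a2,b2) \<in> ADJ" and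
    D: "D = {(of_int i, of_int j), (of_int i + a1, of_int j + b1),
          (of_int i + (a1+a2)/2, of_int j + (b1+b2)/2)}" using BH_param[OF assms(1)] by blast
  have "j = N \<or> j \<ge> N + 1 \<or> j \<le> N - 1" by linarith
  then have n: "of_int j = L \<or> of_int j \<ge> L + 1 \<or> of_int j \<le> L - 1"
    unfolding assms(2) by (metis of_int_add of_int_le_iff of_int_diff of_int_1)
  show ?thesis using h(2) n unfolding D
    apply (simp only: ADJ_def insert_iff empty_iff prod.inject)
    apply (elim disjE conjE)
    apply (simp_all)
    done
qed

lemma side_a1:
  assumes "D \<in> BH_chambers" "T = 3 * of_int K"
  shows "(\<forall>p\<in>D. 2 * fst p + snd p \<le> T) \<or> (\<forall>p\<in>D. 2 * fst p + snd p \<ge> T)"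
proof -
  obtain i j a1 b1 a2 b2 where h: "(3::int) dvd (i - j)" "(a1,b1,a2,b2) \<in> ADJ" and
    D: "D = {(of_int i, of_int j), (of_int i + a1, of_int j + b1),
          (of_int i + (a1+a2)/2, of_int j + (b1+b2)/2)}" using BH_param[OF assms(1)] by blast
  have "2*i + j = 3*K \<or> 2*i + j \<ge> 3*K + 3 \<or> 2*i + j \<le> 3*K - 3" using h(1) by presburger
  then have n: "2 * of_int i + of_int j = T \<or> 2 * of_int i + of_int j \<ge> T + 3 \<or> 2 * of_int i + of_int j \<le> T - 3"
    unfolding assms(2) by (metis (mono_tags, opaque_lifting) of_int_add of_int_le_iff of_int_diff of_int_mult of_int_numeral)
  show ?thesis using h(2) n unfolding D
    apply (simp only: ADJ_def insert_iff empty_iff prod.inject)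
    apply (elim disjE conjE)
    apply (simp_all)
    done
qed

lemma side_a2:
  assumes "D \<in> BH_chambers" "T = 3 * of_int K"
  shows "(\<forall>p\<in>D. fst p + 2 * snd p \<le> T) \<or> (\<forall>p\<in>D. fst p + 2 * snd p \<ge> T)"
proof -
  obtain i j a1 b1 a2 b2 where h: "(3::int) dvd (i - j)" "(a1,b1,a2,b2) \<in> ADJ" and
    D: "D = {(of_int i, of_int j), (of_int i + a1, of_int j + b1),
          (of_int i + (a1+a2)/2, of_int j + (b1+b2)/2)}" using BH_param[OF assms(1)] by blast
  have "i + 2*j = 3*K \<or> i + 2*j \<ge> 3*K + 3 \<or> i + 2*j \<le> 3*K - 3" using h(1) by presburger
  then have n: "of_int i + 2 * of_int j = T \<or> of_int i + 2 * of_int j \<ge> T + 3 \<or> of_int i + 2 * of_int j \<le> T - 3"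
    unfolding assms(2) by (metis (mono_tags, opaque_lifting) of_int_add of_int_le_iff of_int_diff of_int_mult of_int_numeral)
  show ?thesis using h(2) n unfolding D
    apply (simp only: ADJ_def insert_iff empty_iff prod.inject)
    apply (elim disjE conjE)
    apply (simp_all)
    done
qed



lemma half_not_int: "(1/2::real) \<notin> \<int>" "(3/2::real) \<notin> \<int>"
proof -
  show "(1/2::real) \<notin> \<int>"
  proof
    assume "(1/2::real) \<in> \<int>"
    then obtain n where "(1/2::real) = of_int n" by (auto elim!: Ints_cases)
    then have "(of_int (2*n)::real) = of_int 1" by simp
    then have "2*n = 1" by (simp only: of_int_eq_iff)
    then show False by presburger
  qed
  show "(3/2::real) \<notin> \<int>"
  proof
    assume "(3/2::real) \<in> \<int>"
    then obtain n where "(3/2::real) = of_int n" by (auto elim!: Ints_cases)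
    then have "(of_int (2*n)::real) = of_int 3" by simp
    then have "2*n = 3" by (simp only: of_int_eq_iff)
    then show False by presburger
  qed
qed

lemma face_int: "face_ctr (of_int i, of_int j) \<longleftrightarrow> (3::int) dvd (i - j)"
  unfolding face_iff by auto

lemma latt_int: "latt (of_int i, of_int j)"
  unfolding latt_def by simp

lemma pts: "face_ctr (0,0)" "face_ctr (1,1)" "hex_vert (0,1)" "hex_vert (1,0)" "hex_vert (0,2)"
  "\<not> latt (1/2,1/2)" "\<not> latt (0,3/2)"
  using face_int[of 0 0] face_int[of 1 1] face_int[of 0 1] face_int[of 1 0] face_int[of 0 2]
    latt_int[of 0 1] latt_int[of 1 0] latt_int[of 0 2] half_not_int
  by (simp_all add: hex_vert_def latt_def)

lemma cols: "BH_colour (0,0) = 2" "BH_colour (1,1) = 2" "BH_colour (0,1) = 0"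
  "BH_colour (1/2,1/2) = 1" "BH_colour (0,3/2) = 1"
proof -
  have nf: "\<not> face_ctr (1/2,1/2)" "\<not> face_ctr (0,3/2)" using pts(6,7) unfolding face_ctr_def by simp_all
  have nh: "\<not> hex_vert (1/2,1/2)" "\<not> hex_vert (0,3/2)" using pts(6,7) unfolding hex_vert_def by simp_all
  have nf2: "\<not> face_ctr (0,1)" using pts(3) unfolding hex_vert_def by simp
  show "BH_colour (0,0) = 2" "BH_colour (1,1) = 2" "BH_colour (0,1) = 0"
    "BH_colour (1/2,1/2) = 1" "BH_colour (0,3/2) = 1"
    unfolding BH_colour_def using pts(1,2,3) nf nh nf2 by simp_all
qed

lemma nbrs: "nbr (0,0) (0,1)" "nbr (0,0) (1,0)" "nbr (0,1) (1,0)"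
  "nbr (1,1) (0,1)" "nbr (1,1) (1,0)" "nbr (1,1) (0,2)" "nbr (0,1) (0,2)"
  using latt_int[of 0 0] latt_int[of 0 1] latt_int[of 1 0] latt_int[of 1 1] latt_int[of 0 2]
  unfolding nbr_def by simp_all

lemma Q_BH: "Q0 \<in> BH_chambers" "Q1 \<in> BH_chambers" "Q2 \<in> BH_chambers"
proof -
  have m1: "midpt (0,1) (1,0) = (1/2,1/2)" "midpt (0,1) (0,2) = (0,3/2)" by (simp_all add: midpt_def)
  show "Q0 \<in> BH_chambers" unfolding BH_chambers_def Q0_def
    using pts nbrs m1 by (intro CollectI exI[of _ "(0,0)"] exI[of _ "(0,1)"] exI[of _ "(1,0)"]) simp
  show "Q1 \<in> BH_chambers" unfolding BH_chambers_def Q1_def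
    using pts nbrs m1 by (intro CollectI exI[of _ "(1,1)"] exI[of _ "(0,1)"] exI[of _ "(1,0)"]) simp
  show "Q2 \<in> BH_chambers" unfolding BH_chambers_def Q2_def
    using pts nbrs m1 by (intro CollectI exI[of _ "(1,1)"] exI[of _ "(0,1)"] exI[of _ "(0,2)"]) simp
qed

lemma chQ: "chambers (GC 1 1) = {Q0,Q1,Q2}"
proof -
  have "chambers (GC 1 1) = {C \<in> BH_chambers. \<forall>p\<in>C. tll 1 p}" using chambers_kk[of 1] by simp
  also have "\<dots> = {Q0,Q1,Q2}"
  proof
    show "{C \<in> BH_chambers. \<forall>p\<in>C. tll 1 p} \<subseteq> {Q0, Q1, Q2}" using chQ_sub by blast
    show "{Q0, Q1, Q2} \<subseteq> {C \<in> BH_chambers. \<forall>p\<in>C. tll 1 p}"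
      using Q_BH by (auto simp: Q0_def Q1_def Q2_def tll_def)
  qed
  finally show ?thesis .
qed

lemma Qdist: "Q0 \<noteq> Q1" "Q0 \<noteq> Q2" "Q1 \<noteq> Q2" "Q1 \<noteq> Q0" "Q2 \<noteq> Q0" "Q2 \<noteq> Q1"
proof -
  have "(0,0) \<in> Q0" "(0,0) \<notin> Q1" "(0,0) \<notin> Q2" "(1/2,1/2) \<in> Q1" "(1/2,1/2) \<notin> Q2"
    by (simp_all add: Q0_def Q1_def Q2_def)
  then show "Q0 \<noteq> Q1" "Q0 \<noteq> Q2" "Q1 \<noteq> Q2" "Q1 \<noteq> Q0" "Q2 \<noteq> Q0" "Q2 \<noteq> Q1" by auto
qed

definition vtx :: "(real \<times> real) set \<Rightarrow> nat \<Rightarrow> real \<times> real" where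
  "vtx C k = (if C = Q0 then (if k = 0 then (0,1) else if k = 1 then (1/2,1/2) else (0,0))
    else if C = Q1 then (if k = 0 then (0,1) else if k = 1 then (1/2,1/2) else (1,1))
    else (if k = 0 then (0,1) else if k = 1 then (0,3/2) else (1,1)))"

lemma vtx_vals: "vtx Q0 0 = (0,1)" "vtx Q0 1 = (1/2,1/2)" "vtx Q0 2 = (0,0)"
  "vtx Q1 0 = (0,1)" "vtx Q1 1 = (1/2,1/2)" "vtx Q1 2 = (1,1)"
  "vtx Q2 0 = (0,1)" "vtx Q2 1 = (0,3/2)" "vtx Q2 2 = (1,1)"
  unfolding vtx_def using Qdist by simp_all

lemma vtx_col: assumes "k < 3" shows "BH_colour (vtx C k) = k"
proof -
  have k: "k = 0 \<or> k = 1 \<or> k = 2" using assms by auto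
  show ?thesis using k by (elim disjE) (simp_all add: vtx_def cols)
qed

lemma vtx_C: assumes "C \<in> {Q0,Q1,Q2}" shows "C = vtx C ` {0,1,2}"
proof -
  have i: "vtx C ` {0,1,2} = {vtx C 0, vtx C 1, vtx C 2}" by simp
  show ?thesis using assms unfolding i
    by (elim insertE emptyE; simp only: vtx_vals; simp add: Q0_def Q1_def Q2_def insert_commute)
qed

lemma vtx_sel: assumes "C \<in> {Q0,Q1,Q2}" "S \<subseteq> {..<3}"
  shows "{x \<in> C. BH_colour x \<in> S} = vtx C ` S"
proof
  show "{x \<in> C. BH_colour x \<in> S} \<subseteq> vtx C ` S"
  proof
    fix x assume x: "x \<in> {x \<in> C. BH_colour x \<in> S}"
    then obtain m where m: "m \<in> {0,1,2}" "x = vtx C m" using vtx_C[OF assms(1)] by blast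
    then have "BH_colour x = m" using vtx_col by auto
    then show "x \<in> vtx C ` S" using x m by auto
  qed
  show "vtx C ` S \<subseteq> {x \<in> C. BH_colour x \<in> S}"
  proof
    fix x assume "x \<in> vtx C ` S"
    then obtain m where m: "m \<in> S" "x = vtx C m" by blast
    then have "m < 3" using assms(2) by auto
    then have "m \<in> {0,1,2}" by auto
    then have "x \<in> C" using vtx_C[OF assms(1)] m by blast
    moreover have "BH_colour x = m" using m \<open>m < 3\<close> vtx_col by auto
    ultimately show "x \<in> {x \<in> C. BH_colour x \<in> S}" using m by auto
  qed
qed

lemma vtx_img_eq: assumes "S \<subseteq> {..<3}"
  shows "vtx C ` S = vtx C' ` S \<longleftrightarrow> (\<forall>k\<in>S. vtx C k = vtx C' k)"
proof
  assume e: "vtx C ` S = vtx C' ` S"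
  show "\<forall>k\<in>S. vtx C k = vtx C' k"
  proof
    fix k assume k: "k \<in> S"
    then have "vtx C k \<in> vtx C' ` S" using e by blast
    then obtain j where j: "j \<in> S" "vtx C k = vtx C' j" by blast
    have "k = j" using vtx_col[of k C] vtx_col[of j C'] j k assms by auto
    then show "vtx C k = vtx C' k" using j by simp
  qed
qed (auto intro: image_cong)

lemma grel_char:
  fixes Op :: "(real \<times> real) oper"
  assumes "C \<in> {Q0,Q1,Q2}" "C' \<in> {Q0,Q1,Q2}" "carrier Op p \<subseteq> {..<3}"
  shows "glue_rel Op (GC 1 1) (C,p) (C',q) \<longleftrightarrow> p = q \<and> (\<forall>k\<in>carrier Op p. vtx C k = vtx C' k)"
  unfolding glue_rel_def using vtx_sel[OF assms(1,3)] vtx_sel[OF assms(2,3)] vtx_img_eq[OF assms(3)]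
  by (auto simp: GC_simps)

lemma carrier_sub: "carrier (GC l m) p \<subseteq> {..<3}"
  unfolding GC_simps by auto



lemma carrier_l0:
  assumes l: "l \<ge> 1" and t: "tl0 (real l) p"
  shows "k \<in> carrier (GC l 0) p \<longleftrightarrow>
     (k = 0 \<and> snd p < fst p) \<or> (k = 1 \<and> 0 < snd p) \<or> (k = 2 \<and> fst p + snd p < real l)"
proof -
  have L: "real l > 0" using l by simp
  have e: "GC_corner l 0 0 = (real l, 0)" "GC_corner l 0 1 = (real l/2, real l/2)" "GC_corner l 0 2 = (0,0)"
    by (simp_all add: GC_corner_def)
  have "k \<in> carrier (GC l 0) p \<longleftrightarrow> k < 3 \<and>
     [(fst p - snd p)/real l, 2*snd p/real l, 1 - (fst p + snd p)/real l] ! k > 0"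
    unfolding GC_simps e using t by (simp add: bary_l0[OF L])
  also have "\<dots> \<longleftrightarrow> (k = 0 \<and> snd p < fst p) \<or> (k = 1 \<and> 0 < snd p) \<or> (k = 2 \<and> fst p + snd p < real l)"
  proof -
    have a: "(fst p - snd p)/real l > 0 \<longleftrightarrow> snd p < fst p" using L by (simp add: zero_less_divide_iff)
    have b: "2*snd p/real l > 0 \<longleftrightarrow> 0 < snd p" using L by (simp add: zero_less_divide_iff)
    have c: "1 - (fst p + snd p)/real l > 0 \<longleftrightarrow> fst p + snd p < real l" using L by (simp add: field_simps)
    show ?thesis
    proof (cases "k < 3")
      case True
      then have "k = 0 \<or> k = 1 \<or> k = 2" by auto
      then show ?thesis using a b c by (elim disjE) simp_all
    qed simp
  qed
  finally show ?thesis .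
qed

lemma ball3: assumes "\<And>k. k \<in> S \<longleftrightarrow> (k = (0::nat) \<and> A) \<or> (k = 1 \<and> B) \<or> (k = 2 \<and> D)"
  shows "(\<forall>k\<in>S. P k) \<longleftrightarrow> (A \<longrightarrow> P 0) \<and> (B \<longrightarrow> P 1) \<and> (D \<longrightarrow> P 2)"
proof -
  have "(\<forall>k\<in>S. P k) \<longleftrightarrow> (\<forall>k. ((k = (0::nat) \<and> A) \<or> (k = 1 \<and> B) \<or> (k = 2 \<and> D)) \<longrightarrow> P k)"
    using assms by blast
  also have "\<dots> \<longleftrightarrow> (A \<longrightarrow> P 0) \<and> (B \<longrightarrow> P 1) \<and> (D \<longrightarrow> P 2)" by blast
  finally show ?thesis .
qed

definition psiB :: "real \<Rightarrow> (real \<times> real) set \<Rightarrow> real \<times> real \<Rightarrow> real \<times> real" where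
  "psiB L C = (if C = Q0 then sw else if C = Q1 then rB2 L else rB3 L)"

lemma psiB_simps: "psiB L Q0 = sw" "psiB L Q1 = rB2 L" "psiB L Q2 = rB3 L"
  unfolding psiB_def using Qdist by simp_all

lemma H1b:
  assumes l: "l \<ge> 1" and C: "C \<in> {Q0,Q1,Q2}" and C': "C' \<in> {Q0,Q1,Q2}"
    and p: "tl0 (real l) p" and q: "tl0 (real l) q"
  shows "psiB (real l) C p = psiB (real l) C' q \<longleftrightarrow> glue_rel (GC l 0) (GC 1 1) (C,p) (C',q)"
proof -
  have g: "glue_rel (GC l 0) (GC 1 1) (C,p) (C',q) \<longleftrightarrow> p = q \<and>
     (snd p < fst p \<longrightarrow> vtx C 0 = vtx C' 0) \<and> (0 < snd p \<longrightarrow> vtx C 1 = vtx C' 1) \<and>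
     (fst p + snd p < real l \<longrightarrow> vtx C 2 = vtx C' 2)"
    unfolding grel_char[OF C C' carrier_sub] ball3[OF carrier_l0[OF l p]] by simp
  obtain x1 y1 where pp: "p = (x1,y1)" by (cases p)
  obtain x2 y2 where qq: "q = (x2,y2)" by (cases q)
  show ?thesis unfolding g using C C' p q unfolding pp qq
    by (elim insertE emptyE; simp only: psiB_simps vtx_vals; simp add: sw_def rB2_def rB3_def tl0_def; linarith?)
qed

lemma pull: assumes "aut f g" "D \<in> BH_chambers" "\<forall>p\<in>D. P (g p)"
  shows "g ` D \<in> {T \<in> BH_chambers. \<forall>p\<in>T. P p}" "D = f ` (g ` D)"
proof -
  show "g ` D \<in> {T \<in> BH_chambers. \<forall>p\<in>T. P p}" using aut_BH[OF aut_sym[OF assms(1)] assms(2)] assms(3) by auto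
  have fg: "\<And>p. f (g p) = p" using assms(1) unfolding aut_def by blast
  show "D = f ` (g ` D)" by (simp add: image_image fg)
qed

lemma memI: "C \<in> {Q0,Q1,Q2} \<Longrightarrow> T \<in> X \<Longrightarrow> D = psiB L C ` T \<Longrightarrow>
   D \<in> {psiB L C ` T | C T. C \<in> {Q0,Q1,Q2} \<and> T \<in> X}"
  by blast

lemma H2b: assumes l: "l \<ge> 1"
  shows "chambers (GC l l) = {psiB (real l) C ` T | C T. C \<in> chambers (GC 1 1) \<and> T \<in> chambers (GC l 0)}"
proof -
  let ?L = "real l"
  have LZ: "?L \<in> \<int>" by simp
  have LN: "?L = of_int (int l)" by simp
  have A: "chambers (GC l l) = {D \<in> BH_chambers. \<forall>p\<in>D. tll ?L p}" using chambers_kk[OF l] .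
  have O: "chambers (GC l 0) = {D \<in> BH_chambers. \<forall>p\<in>D. tl0 ?L p}" using chambers_l0[OF l] .
  show ?thesis unfolding A O chQ
  proof
    show "{D \<in> BH_chambers. \<forall>p\<in>D. tll ?L p} \<subseteq>
      {psiB ?L C ` T |C T. C \<in> {Q0, Q1, Q2} \<and> T \<in> {D \<in> BH_chambers. \<forall>p\<in>D. tl0 ?L p}}"
    proof
      fix D assume "D \<in> {D \<in> BH_chambers. \<forall>p\<in>D. tll ?L p}"
      then have D: "D \<in> BH_chambers" "\<forall>p\<in>D. tll ?L p" by auto
      have s1: "(\<forall>p\<in>D. fst p + snd p \<le> ?L) \<or> (\<forall>p\<in>D. fst p + snd p \<ge> ?L)" using side_b1[OF D(1) LN] .
      have s2: "(\<forall>p\<in>D. snd p \<le> ?L) \<or> (\<forall>p\<in>D. snd p \<ge> ?L)" using side_b2[OF D(1) LN] .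
      show "D \<in> {psiB ?L C ` T |C T. C \<in> {Q0, Q1, Q2} \<and> T \<in> {D \<in> BH_chambers. \<forall>p\<in>D. tl0 ?L p}}"
      proof (cases "\<forall>p\<in>D. fst p + snd p \<le> ?L")
        case True
        have "\<forall>p\<in>D. tl0 ?L (sw p)" using True D(2) by (auto simp: tl0_def tll_def sw_def)
        from pull[OF aut_sw D(1) this] show ?thesis
          by (intro memI[of Q0 "sw ` D"]) (simp_all add: psiB_simps)
      next
        case F1: False
        then have g1: "\<forall>p\<in>D. fst p + snd p \<ge> ?L" using s1 by blast
        show ?thesis
        proof (cases "\<forall>p\<in>D. snd p \<le> ?L")
          case True
          have "\<forall>p\<in>D. tl0 ?L (rB2 ?L p)" using True g1 D(2) by (auto simp: tl0_def tll_def rB2_def)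
          from pull[OF aut_rB2[OF LZ] D(1) this] show ?thesis
            by (intro memI[of Q1 "rB2 ?L ` D"]) (simp_all add: psiB_simps)
        next
          case False
          then have g2: "\<forall>p\<in>D. snd p \<ge> ?L" using s2 by blast
          have "\<forall>p\<in>D. tl0 ?L (rB3i ?L p)" using g2 D(2) by (auto simp: tl0_def tll_def rB3i_def)
          from pull[OF aut_rB3[OF LZ] D(1) this] show ?thesis
            by (intro memI[of Q2 "rB3i ?L ` D"]) (simp_all add: psiB_simps)
        qed
      qed
    qed
    show "{psiB ?L C ` T |C T. C \<in> {Q0, Q1, Q2} \<and> T \<in> {D \<in> BH_chambers. \<forall>p\<in>D. tl0 ?L p}}
       \<subseteq> {D \<in> BH_chambers. \<forall>p\<in>D. tll ?L p}"
    proof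
      fix D assume "D \<in> {psiB ?L C ` T |C T. C \<in> {Q0, Q1, Q2} \<and> T \<in> {D \<in> BH_chambers. \<forall>p\<in>D. tl0 ?L p}}"
      then obtain C T where D: "D = psiB ?L C ` T" "C \<in> {Q0,Q1,Q2}" "T \<in> BH_chambers" "\<forall>p\<in>T. tl0 ?L p" by blast
      have au: "\<exists>g. aut (psiB ?L C) g" using D(2) aut_sw aut_rB2[OF LZ] aut_rB3[OF LZ]
        by (elim insertE emptyE) (auto simp: psiB_simps)
      have bh: "D \<in> BH_chambers" using au aut_BH D(1,3) by blast
      have "\<forall>p\<in>T. tll ?L (psiB ?L C p)" using D(2,4)
        by (elim insertE emptyE) (auto simp: psiB_simps tl0_def tll_def sw_def rB2_def rB3_def)
      then show "D \<in> {D \<in> BH_chambers. \<forall>p\<in>D. tll ?L p}" using bh D(1) by auto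
    qed
  qed
qed

lemma Qmem: "(1,1) \<notin> Q0" "(1,1) \<in> Q1" "(1,1) \<in> Q2" "(0,3/2) \<notin> Q0" "(0,3/2) \<notin> Q1" "(0,3/2) \<in> Q2"
  "(0,0) \<in> Q0" "(0,0) \<notin> Q1" "(0,0) \<notin> Q2"
  by (simp_all add: Q0_def Q1_def Q2_def)

lemma cornQ: "corner (GC 1 1) 0 = (1,1)" "corner (GC 1 1) (Suc 0) = (0,3/2)" "corner (GC 1 1) 2 = (0,0)"
  by (simp_all add: GC_simps GC_corner_def)

lemma k3: "(k::nat) < 3 \<Longrightarrow> k = 0 \<or> k = Suc 0 \<or> k = 2" by auto

lemma partb: assumes l: "l \<ge> 1" shows "ctri_iso (GC l l) (gc_comp (GC l 0) (GC 1 1))"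
proof (rule iso_glue[where \<psi> = "psiB (real l)" and R = "tl0 (real l)"])
  let ?L = "real l"
  have LZ: "?L \<in> \<int>" by simp
  show "\<And>T p. T \<in> chambers (GC l 0) \<Longrightarrow> p \<in> T \<Longrightarrow> tl0 ?L p" using chambers_l0[OF l] by auto
  show "\<And>C C' p q. C \<in> chambers (GC 1 1) \<Longrightarrow> C' \<in> chambers (GC 1 1) \<Longrightarrow> tl0 ?L p \<Longrightarrow> tl0 ?L q \<Longrightarrow>
      psiB ?L C p = psiB ?L C' q \<longleftrightarrow> glue_rel (GC l 0) (GC 1 1) (C, p) (C', q)"
    using H1b[OF l] unfolding chQ by blast
  show "chambers (GC l l) = {psiB ?L C ` T |C T. C \<in> chambers (GC 1 1) \<and> T \<in> chambers (GC l 0)}"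
    using H2b[OF l] .
  show "colour (GC l l) (psiB ?L C p) = colour (GC l 0) p" if "C \<in> chambers (GC 1 1)" for C p
  proof -
    have "\<exists>g. aut (psiB ?L C) g" using that unfolding chQ using aut_sw aut_rB2[OF LZ] aut_rB3[OF LZ]
      by (elim insertE emptyE) (auto simp: psiB_simps)
    then obtain g where "aut (psiB ?L C) g" by blast
    from aut_colour[OF this, of p] show ?thesis by (simp add: GC_simps)
  qed
  show "\<exists>C\<in>chambers (GC 1 1). corner (GC 1 1) k \<in> C" if "k < 3" for k
    unfolding chQ using k3[OF that] cornQ Qmem by auto
  show "psiB ?L C (corner (GC l 0) (colour (GC 1 1) (corner (GC 1 1) k))) = corner (GC l l) k \<and>
        tl0 ?L (corner (GC l 0) (colour (GC 1 1) (corner (GC 1 1) k)))"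
    if "k < 3" "C \<in> chambers (GC 1 1)" "corner (GC 1 1) k \<in> C" for k C
    using k3[OF that(1)] that(2,3) unfolding chQ GC_simps(2,3)
    apply (elim disjE insertE emptyE)
    apply (simp_all add: GC_corner_def)
    apply (simp_all add: Qmem)
    apply (simp_all add: cols psiB_simps sw_def rB2_def rB3_def tl0_def)
    done
qed



lemma carrier_kk:
  assumes k: "k \<ge> 1" and t: "tll (real k) p"
  shows "m \<in> carrier (GC k k) p \<longleftrightarrow>
     (m = 0 \<and> 0 < fst p) \<or> (m = 1 \<and> fst p < snd p) \<or> (m = 2 \<and> fst p + 2 * snd p < 3 * real k)"
proof -
  have K: "real k > 0" using k by simp
  have e: "GC_corner k k 0 = (real k, real k)" "GC_corner k k 1 = (0, 3 * real k / 2)" "GC_corner k k 2 = (0,0)"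
    by (simp_all add: GC_corner_def)
  have "m \<in> carrier (GC k k) p \<longleftrightarrow> m < 3 \<and>
     [fst p/real k, 2*(snd p - fst p)/(3*real k), 1 - (fst p + 2*snd p)/(3*real k)] ! m > 0"
    unfolding GC_simps e using t by (simp add: bary_ll[OF K])
  also have "\<dots> \<longleftrightarrow> (m = 0 \<and> 0 < fst p) \<or> (m = 1 \<and> fst p < snd p) \<or> (m = 2 \<and> fst p + 2 * snd p < 3 * real k)"
  proof -
    have a: "fst p/real k > 0 \<longleftrightarrow> 0 < fst p" using K by (simp add: zero_less_divide_iff)
    have b: "2*(snd p - fst p)/(3*real k) > 0 \<longleftrightarrow> fst p < snd p" using K by (simp add: zero_less_divide_iff)
    have c: "1 - (fst p + 2*snd p)/(3*real k) > 0 \<longleftrightarrow> fst p + 2 * snd p < 3 * real k" using K by (simp add: field_simps)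
    show ?thesis
    proof (cases "m < 3")
      case True
      then have "m = 0 \<or> m = 1 \<or> m = 2" by auto
      then show ?thesis using a b c by (elim disjE) simp_all
    qed simp
  qed
  finally show ?thesis .
qed

definition psiA :: "real \<Rightarrow> (real \<times> real) set \<Rightarrow> real \<times> real \<Rightarrow> real \<times> real" where
  "psiA T C = (if C = Q0 then sw else if C = Q1 then rA2 T else rA3 T)"

lemma psiA_simps: "psiA T Q0 = sw" "psiA T Q1 = rA2 T" "psiA T Q2 = rA3 T"
  unfolding psiA_def using Qdist by simp_all

lemma H1a:
  assumes k: "k \<ge> 1" and C: "C \<in> {Q0,Q1,Q2}" and C': "C' \<in> {Q0,Q1,Q2}"
    and p: "tll (real k) p" and q: "tll (real k) q"
  shows "psiA (3 * real k) C p = psiA (3 * real k) C' q \<longleftrightarrow> glue_rel (GC k k) (GC 1 1) (C,p) (C',q)"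
proof -
  have g: "glue_rel (GC k k) (GC 1 1) (C,p) (C',q) \<longleftrightarrow> p = q \<and>
     (0 < fst p \<longrightarrow> vtx C 0 = vtx C' 0) \<and> (fst p < snd p \<longrightarrow> vtx C 1 = vtx C' 1) \<and>
     (fst p + 2 * snd p < 3 * real k \<longrightarrow> vtx C 2 = vtx C' 2)"
    unfolding grel_char[OF C C' carrier_sub] ball3[OF carrier_kk[OF k p]] by simp
  obtain x1 y1 where pp: "p = (x1,y1)" by (cases p)
  obtain x2 y2 where qq: "q = (x2,y2)" by (cases q)
  show ?thesis unfolding g using C C' p q unfolding pp qq
    by (elim insertE emptyE; simp only: psiA_simps vtx_vals; simp add: sw_def rA2_def rA3_def tll_def; linarith?)
qed

lemma memIA: "C \<in> {Q0,Q1,Q2} \<Longrightarrow> T \<in> X \<Longrightarrow> D = psiA L C ` T \<Longrightarrow>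
   D \<in> {psiA L C ` T | C T. C \<in> {Q0,Q1,Q2} \<and> T \<in> X}"
  by blast

lemma H2a: assumes k: "k \<ge> 1"
  shows "chambers (GC (3*k) 0) = {psiA (3 * real k) C ` T | C T. C \<in> chambers (GC 1 1) \<and> T \<in> chambers (GC k k)}"
proof -
  let ?K = "real k"
  let ?T = "3 * real k"
  have TN: "?T = 3 * of_int (int k)" by simp
  have l: "3 * k \<ge> 1" using k by simp
  have A: "chambers (GC (3*k) 0) = {D \<in> BH_chambers. \<forall>p\<in>D. tl0 ?T p}" using chambers_l0[OF l] by simp
  have O: "chambers (GC k k) = {D \<in> BH_chambers. \<forall>p\<in>D. tll ?K p}" using chambers_kk[OF k] .
  show ?thesis unfolding A O chQ
  proof
    show "{D \<in> BH_chambers. \<forall>p\<in>D. tl0 ?T p} \<subseteq>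
      {psiA ?T C ` T |C T. C \<in> {Q0, Q1, Q2} \<and> T \<in> {D \<in> BH_chambers. \<forall>p\<in>D. tll ?K p}}"
    proof
      fix D assume "D \<in> {D \<in> BH_chambers. \<forall>p\<in>D. tl0 ?T p}"
      then have D: "D \<in> BH_chambers" "\<forall>p\<in>D. tl0 ?T p" by auto
      have s1: "(\<forall>p\<in>D. 2 * fst p + snd p \<le> ?T) \<or> (\<forall>p\<in>D. 2 * fst p + snd p \<ge> ?T)" using side_a1[OF D(1) TN] .
      have s2: "(\<forall>p\<in>D. fst p + 2 * snd p \<le> ?T) \<or> (\<forall>p\<in>D. fst p + 2 * snd p \<ge> ?T)" using side_a2[OF D(1) TN] .
      show "D \<in> {psiA ?T C ` T |C T. C \<in> {Q0, Q1, Q2} \<and> T \<in> {D \<in> BH_chambers. \<forall>p\<in>D. tll ?K p}}"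
      proof (cases "\<forall>p\<in>D. 2 * fst p + snd p \<le> ?T")
        case True
        have "\<forall>p\<in>D. tll ?K (sw p)" using True D(2) by (auto simp: tl0_def tll_def sw_def)
        from pull[OF aut_sw D(1) this] show ?thesis
          by (intro memIA[of Q0 "sw ` D"]) (simp_all add: psiA_simps)
      next
        case F1: False
        then have g1: "\<forall>p\<in>D. 2 * fst p + snd p \<ge> ?T" using s1 by blast
        show ?thesis
        proof (cases "\<forall>p\<in>D. fst p + 2 * snd p \<le> ?T")
          case True
          have "\<forall>p\<in>D. tll ?K (rA2i ?T p)" using True g1 D(2) by (auto simp: tl0_def tll_def rA2i_def)
          from pull[OF aut_rA2[OF TN] D(1) this] show ?thesis
            by (intro memIA[of Q1 "rA2i ?T ` D"]) (simp_all add: psiA_simps)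
        next
          case False
          then have g2: "\<forall>p\<in>D. fst p + 2 * snd p \<ge> ?T" using s2 by blast
          have "\<forall>p\<in>D. tll ?K (rA3 ?T p)" using g2 D(2) by (auto simp: tl0_def tll_def rA3_def)
          from pull[OF aut_rA3[OF TN] D(1) this] show ?thesis
            by (intro memIA[of Q2 "rA3 ?T ` D"]) (simp_all add: psiA_simps)
        qed
      qed
    qed
    show "{psiA ?T C ` T |C T. C \<in> {Q0, Q1, Q2} \<and> T \<in> {D \<in> BH_chambers. \<forall>p\<in>D. tll ?K p}}
       \<subseteq> {D \<in> BH_chambers. \<forall>p\<in>D. tl0 ?T p}"
    proof
      fix D assume "D \<in> {psiA ?T C ` T |C T. C \<in> {Q0, Q1, Q2} \<and> T \<in> {D \<in> BH_chambers. \<forall>p\<in>D. tll ?K p}}"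
      then obtain C T where D: "D = psiA ?T C ` T" "C \<in> {Q0,Q1,Q2}" "T \<in> BH_chambers" "\<forall>p\<in>T. tll ?K p" by blast
      have au: "\<exists>g. aut (psiA ?T C) g" using D(2) aut_sw aut_rA2[OF TN] aut_rA3[OF TN]
        by (elim insertE emptyE) (auto simp: psiA_simps)
      have bh: "D \<in> BH_chambers" using au aut_BH D(1,3) by blast
      have "\<forall>p\<in>T. tl0 ?T (psiA ?T C p)" using D(2,4)
        by (elim insertE emptyE) (auto simp: psiA_simps tl0_def tll_def sw_def rA2_def rA3_def)
      then show "D \<in> {D \<in> BH_chambers. \<forall>p\<in>D. tl0 ?T p}" using bh D(1) by auto
    qed
  qed
qed

lemma parta: assumes k: "k \<ge> 1" shows "ctri_iso (GC (3*k) 0) (gc_comp (GC k k) (GC 1 1))"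
proof (rule iso_glue[where \<psi> = "psiA (3 * real k)" and R = "tll (real k)"])
  let ?T = "3 * real k"
  have TN: "?T = 3 * of_int (int k)" by simp
  show "\<And>T p. T \<in> chambers (GC k k) \<Longrightarrow> p \<in> T \<Longrightarrow> tll (real k) p" using chambers_kk[OF k] by auto
  show "\<And>C C' p q. C \<in> chambers (GC 1 1) \<Longrightarrow> C' \<in> chambers (GC 1 1) \<Longrightarrow> tll (real k) p \<Longrightarrow> tll (real k) q \<Longrightarrow>
      psiA ?T C p = psiA ?T C' q \<longleftrightarrow> glue_rel (GC k k) (GC 1 1) (C, p) (C', q)"
    using H1a[OF k] unfolding chQ by blast
  show "chambers (GC (3*k) 0) = {psiA ?T C ` T |C T. C \<in> chambers (GC 1 1) \<and> T \<in> chambers (GC k k)}"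
    using H2a[OF k] .
  show "colour (GC (3*k) 0) (psiA ?T C p) = colour (GC k k) p" if "C \<in> chambers (GC 1 1)" for C p
  proof -
    have "\<exists>g. aut (psiA ?T C) g" using that unfolding chQ using aut_sw aut_rA2[OF TN] aut_rA3[OF TN]
      by (elim insertE emptyE) (auto simp: psiA_simps)
    then obtain g where "aut (psiA ?T C) g" by blast
    from aut_colour[OF this, of p] show ?thesis by (simp add: GC_simps)
  qed
  show "\<exists>C\<in>chambers (GC 1 1). corner (GC 1 1) m \<in> C" if "m < 3" for m
    unfolding chQ using k3[OF that] cornQ Qmem by auto
  show "psiA ?T C (corner (GC k k) (colour (GC 1 1) (corner (GC 1 1) m))) = corner (GC (3*k) 0) m \<and>
        tll (real k) (corner (GC k k) (colour (GC 1 1) (corner (GC 1 1) m)))"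
    if "m < 3" "C \<in> chambers (GC 1 1)" "corner (GC 1 1) m \<in> C" for m C
    using k3[OF that(1)] that(2,3) unfolding chQ GC_simps(2,3)
    apply (elim disjE insertE emptyE)
    apply (simp_all add: GC_corner_def)
    apply (simp_all add: Qmem)
    apply (simp_all add: cols psiA_simps sw_def rA2_def rA3_def tll_def)
    done
qed



theorem lemma11:
  shows "(\<forall>l::nat. l \<ge> 1 \<longrightarrow> colour (GC l 0) (corner (GC l 0) 0) = 2 \<longrightarrow>
            (\<exists>k::nat. k \<ge> 1 \<and> l = 3 * k \<and> ctri_iso (GC (3 * k) 0) (gc_comp (GC k k) (GC 1 1))))
       \<and> (\<forall>l::nat. l \<ge> 1 \<longrightarrow> ctri_iso (GC l l) (gc_comp (GC l 0) (GC 1 1)))"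
proof (intro conjI allI impI)
  fix l :: nat assume l: "l \<ge> 1" and c: "colour (GC l 0) (corner (GC l 0) 0) = 2"
  have "BH_colour (real l, 0) = 2" using c by (simp add: GC_simps GC_corner_def)
  then have "face_ctr (real l, 0)" unfolding BH_colour_def by (auto split: if_splits)
  then have "face_ctr (of_int (int l), of_int 0)" by simp
  then have "(3::int) dvd (int l - 0)" by (simp only: face_int)
  then have d: "3 dvd l" by presburger
  define k where "k = l div 3"
  have lk: "l = 3 * k" using d unfolding k_def by simp
  have k1: "k \<ge> 1" using l lk by simp
  show "\<exists>k::nat. k \<ge> 1 \<and> l = 3 * k \<and> ctri_iso (GC (3 * k) 0) (gc_comp (GC k k) (GC 1 1))"
    using k1 lk parta[OF k1] by blast
next
  fix l :: nat assume l: "l \<ge> 1"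
  show "ctri_iso (GC l l) (gc_comp (GC l 0) (GC 1 1))" using partb[OF l] .
qed


end
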